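(* Let $(\mathcal X_S,\mathcal X_O,\mathcal X_A,\mathfrak p,\mathbf r)$ be a POMDP and $T\in\mathbb Z_+$. For every feasible solution $(\mu,\delta)$ of the MILP (i.e. $(\mu,\delta)\in\mathcal Q^{\mathrm d}(T,\mathcal X_S,\mathcal X_O,\mathcal X_A,\mathfrak p)$) there exist nonnegative variables $(\mu^t_{s'a'soa})$, $t\in\{2,\dots,T\}$, such that the valid inequalities (VI) hold. Moreover, these inequalities are not implied by the linear relaxation: there exist POMDPs and feasible solutions $(\mu,\delta)$ of the linear relaxation of the MILP for which no choice of variables $(\mu^t_{s'a'soa})$ satisfies (VI).
   Context: A POMDP $(\mathcal X_S,\mathcal X_O,\mathcal X_A,\mathfrak p,\mathbf r)$ has finite spaces, initial distribution $p(s)$, emission probabilities $p(o|s)$, transitions $p(s'|s,a)$ and reward $r(s,a,s')$; $T$ is a horizon. A deterministic memoryless policy is $\delta=(\delta^t_{a|o})$ with $\delta^t_{a|o}\in\{0,1\}$, $\sum_a\delta^t_{a|o}=1$. The set $\mathcal Q^{\mathrm d}(T,\mathcal X_S,\mathcal X_O,\mathcal X_A,\mathfrak p)$ consists of pairs $(\mu,\delta)$, $\delta$ deterministic memoryless, and nonnegative $\mu=((\mu^1_s),(\mu^t_{soa}),(\mu^t_{sas'}))_{t\in[T]}$ satisfying for all $s,s',o,a,t$: (i) $\mu^1_s=p(s)$; (ii) $\sum_{o,a}\mu^t_{soa}=\nu^t_s$, where $\nu^1_s:=\mu^1_s$ and $\nu^t_s:=\sum_{s'',a''}\mu^{t-1}_{s''a''s}$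 for $t\ge2$; (iii) $\sum_{\bar s}\mu^t_{sa\bar s}=\sum_o\mu^t_{soa}$; (iv) $\mu^t_{sas'}=p(s'|s,a)\sum_{\bar s}\mu^t_{sa\bar s}$; (McCormick) $\mu^t_{soa}\le p(o|s)\nu^t_s$, $\mu^t_{soa}\le\delta^t_{a|o}$, $\mu^t_{soa}\ge p(o|s)\nu^t_s+\delta^t_{a|o}-1$. The MILP is $\max\sum_{t}\sum_{s,a,s'}r(s,a,s')\mu^t_{sas'}$ over $\mathcal Q^{\mathrm d}$; its linear relaxation replaces $\delta^t_{a|o}\in\{0,1\}$ by $\delta^t_{a|o}\in[0,1]$ (keeping $\sum_a\delta^t_{a|o}=1$). Valid inequalities (VI): for all $t\in\{2,\dots,T\}$, $s,s'\in\mathcal X_S$, $o\in\mathcal X_O$, $a,a'\in\mathcal X_A$: $\sum_{s',a'}\mu^t_{s'a'soa}=\mu^t_{soa}$; $\sum_a\mu^t_{s'a'soa}=p(o|s)\mu^{t-1}_{s'a's}$; $\mu^t_{s'a'soa}=p(s|s',a',o)\sum_{\bar s}\mu^t_{s'a'\bar soa}$, where $p(s|s',a',o):=\frac{p(o|s)p(s|s',a')}{\sum_{\bar s}p(o|\bar s)p(\bar s|s',a')}$. *)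

theory Defs
  imports Main "HOL-Library.Extended_Real"
begin

text \<open>POMDP data (reward omitted: it does not enter the feasible set).
  S, Obs, A: state/observation/action spaces (finite carrier sets);
  p0 s = p(s); pO s ob = p(ob|s); pT s a s' = p(s'|s,a).\<close>

definition pomdp ::
  "'s set \<Rightarrow> 'ob set \<Rightarrow> 'a set \<Rightarrow> ('s \<Rightarrow> real) \<Rightarrow> ('s \<Rightarrow> 'ob \<Rightarrow> real)
   \<Rightarrow> ('s \<Rightarrow> 'a \<Rightarrow> 's \<Rightarrow> real) \<Rightarrow> bool" where
  "pomdp S Obs A p0 pO pT \<longleftrightarrow>
     finite S \<and> finite Obs \<and> finite A \<and> S \<noteq> {} \<and> Obs \<noteq> {} \<and> A \<noteq> {} \<and>
     (\<forall>s\<in>S. p0 s \<ge> 0) \<and> (\<Sum>s\<in>S. p0 s) = 1 \<and>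
     (\<forall>s\<in>S. \<forall>ob\<in>Obs. pO s ob \<ge> 0) \<and> (\<forall>s\<in>S. (\<Sum>ob\<in>Obs. pO s ob) = 1) \<and>
     (\<forall>s\<in>S. \<forall>a\<in>A. \<forall>s'\<in>S. pT s a s' \<ge> 0) \<and>
     (\<forall>s\<in>S. \<forall>a\<in>A. (\<Sum>s'\<in>S. pT s a s') = 1)"

definition nu ::
  "'s set \<Rightarrow> 'a set \<Rightarrow> ('s \<Rightarrow> real) \<Rightarrow> (nat \<Rightarrow> 's \<Rightarrow> 'a \<Rightarrow> 's \<Rightarrow> real) \<Rightarrow> nat \<Rightarrow> 's \<Rightarrow> real" where
  "nu S A mu1 muSAS t s =
     (if t = 1 then mu1 s else (\<Sum>s''\<in>S. \<Sum>a''\<in>A. muSAS (t - 1) s'' a'' s))"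

definition lin_relax_feasible ::
  "nat \<Rightarrow> 's set \<Rightarrow> 'ob set \<Rightarrow> 'a set \<Rightarrow> ('s \<Rightarrow> real) \<Rightarrow> ('s \<Rightarrow> 'ob \<Rightarrow> real)
   \<Rightarrow> ('s \<Rightarrow> 'a \<Rightarrow> 's \<Rightarrow> real)
   \<Rightarrow> ('s \<Rightarrow> real) \<Rightarrow> (nat \<Rightarrow> 's \<Rightarrow> 'ob \<Rightarrow> 'a \<Rightarrow> real) \<Rightarrow> (nat \<Rightarrow> 's \<Rightarrow> 'a \<Rightarrow> 's \<Rightarrow> real)
   \<Rightarrow> (nat \<Rightarrow> 'ob \<Rightarrow> 'a \<Rightarrow> real) \<Rightarrow> bool" where
  "lin_relax_feasible T S Obs A p0 pO pT mu1 muSOA muSAS delta \<longleftrightarrow>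
     (\<forall>t\<in>{1..T}. \<forall>ob\<in>Obs. (\<forall>a\<in>A. 0 \<le> delta t ob a \<and> delta t ob a \<le> 1) \<and> (\<Sum>a\<in>A. delta t ob a) = 1) \<and>
     (\<forall>s\<in>S. mu1 s \<ge> 0) \<and>
     (\<forall>t\<in>{1..T}. \<forall>s\<in>S. \<forall>ob\<in>Obs. \<forall>a\<in>A. muSOA t s ob a \<ge> 0) \<and>
     (\<forall>t\<in>{1..T}. \<forall>s\<in>S. \<forall>a\<in>A. \<forall>s'\<in>S. muSAS t s a s' \<ge> 0) \<and>
     (\<forall>s\<in>S. mu1 s = p0 s) \<and>
     (\<forall>t\<in>{1..T}. \<forall>s\<in>S. (\<Sum>ob\<in>Obs. \<Sum>a\<in>A. muSOA t s ob a) = nu S A mu1 muSAS t s) \<and>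
     (\<forall>t\<in>{1..T}. \<forall>s\<in>S. \<forall>a\<in>A. (\<Sum>sb\<in>S. muSAS t s a sb) = (\<Sum>ob\<in>Obs. muSOA t s ob a)) \<and>
     (\<forall>t\<in>{1..T}. \<forall>s\<in>S. \<forall>a\<in>A. \<forall>s'\<in>S. muSAS t s a s' = pT s a s' * (\<Sum>sb\<in>S. muSAS t s a sb)) \<and>
     (\<forall>t\<in>{1..T}. \<forall>s\<in>S. \<forall>ob\<in>Obs. \<forall>a\<in>A.
         muSOA t s ob a \<le> pO s ob * nu S A mu1 muSAS t s \<and>
         muSOA t s ob a \<le> delta t ob a \<and>
         muSOA t s ob a \<ge> pO s ob * nu S A mu1 muSAS t s + delta t ob a - 1)"

definition Qd ::
  "nat \<Rightarrow> 's set \<Rightarrow> 'ob set \<Rightarrow> 'a set \<Rightarrow> ('s \<Rightarrow> real) \<Rightarrow> ('s \<Rightarrow> 'ob \<Rightarrow> real)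
   \<Rightarrow> ('s \<Rightarrow> 'a \<Rightarrow> 's \<Rightarrow> real)
   \<Rightarrow> ('s \<Rightarrow> real) \<Rightarrow> (nat \<Rightarrow> 's \<Rightarrow> 'ob \<Rightarrow> 'a \<Rightarrow> real) \<Rightarrow> (nat \<Rightarrow> 's \<Rightarrow> 'a \<Rightarrow> 's \<Rightarrow> real)
   \<Rightarrow> (nat \<Rightarrow> 'ob \<Rightarrow> 'a \<Rightarrow> real) \<Rightarrow> bool" where
  "Qd T S Obs A p0 pO pT mu1 muSOA muSAS delta \<longleftrightarrow>
     lin_relax_feasible T S Obs A p0 pO pT mu1 muSOA muSAS delta \<and>
     (\<forall>t\<in>{1..T}. \<forall>ob\<in>Obs. \<forall>a\<in>A. delta t ob a \<in> {0, 1})"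

text \<open>p(s|s',a',ob) := p(ob|s) p(s|s',a') / sum_sb p(ob|sb) p(sb|s',a')  (with x/0 = 0).\<close>
definition pcond ::
  "'s set \<Rightarrow> ('s \<Rightarrow> 'ob \<Rightarrow> real) \<Rightarrow> ('s \<Rightarrow> 'a \<Rightarrow> 's \<Rightarrow> real) \<Rightarrow> 's \<Rightarrow> 's \<Rightarrow> 'a \<Rightarrow> 'ob \<Rightarrow> real" where
  "pcond S pO pT s s' a' ob = pO s ob * pT s' a' s / (\<Sum>sb\<in>S. pO sb ob * pT s' a' sb)"

text \<open>The valid inequalities (VI) for the extra nonnegative variables
  muVI t s' a' s ob a = mu^t_{s'a'soa}, t in {2..T}.\<close>
definition VI ::
  "nat \<Rightarrow> 's set \<Rightarrow> 'ob set \<Rightarrow> 'a set \<Rightarrow> ('s \<Rightarrow> 'ob \<Rightarrow> real) \<Rightarrow> ('s \<Rightarrow> 'a \<Rightarrow> 's \<Rightarrow> real)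
   \<Rightarrow> (nat \<Rightarrow> 's \<Rightarrow> 'ob \<Rightarrow> 'a \<Rightarrow> real) \<Rightarrow> (nat \<Rightarrow> 's \<Rightarrow> 'a \<Rightarrow> 's \<Rightarrow> real)
   \<Rightarrow> (nat \<Rightarrow> 's \<Rightarrow> 'a \<Rightarrow> 's \<Rightarrow> 'ob \<Rightarrow> 'a \<Rightarrow> real) \<Rightarrow> bool" where
  "VI T S Obs A pO pT muSOA muSAS muVI \<longleftrightarrow>
     (\<forall>t\<in>{2..T}. \<forall>s'\<in>S. \<forall>a'\<in>A. \<forall>s\<in>S. \<forall>ob\<in>Obs. \<forall>a\<in>A. muVI t s' a' s ob a \<ge> 0) \<and>
     (\<forall>t\<in>{2..T}. \<forall>s\<in>S. \<forall>ob\<in>Obs. \<forall>a\<in>A.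
         (\<Sum>s'\<in>S. \<Sum>a'\<in>A. muVI t s' a' s ob a) = muSOA t s ob a) \<and>
     (\<forall>t\<in>{2..T}. \<forall>s'\<in>S. \<forall>a'\<in>A. \<forall>s\<in>S. \<forall>ob\<in>Obs.
         (\<Sum>a\<in>A. muVI t s' a' s ob a) = pO s ob * muSAS (t - 1) s' a' s) \<and>
     (\<forall>t\<in>{2..T}. \<forall>s'\<in>S. \<forall>a'\<in>A. \<forall>s\<in>S. \<forall>ob\<in>Obs. \<forall>a\<in>A.
         muVI t s' a' s ob a = pcond S pO pT s s' a' ob * (\<Sum>sb\<in>S. muVI t s' a' sb ob a))"

end

theory Submission
  imports Defs
begin

lemma part1:
  assumes P: "pomdp S Obs A p0 pO pT" and Q: "Qd T S Obs A p0 pO pT mu1 muSOA muSAS delta"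
  shows "VI T S Obs A pO pT muSOA muSAS (\<lambda>t s' a' s ob a. delta t ob a * (pO s ob * muSAS (t-1) s' a' s))"
proof -
  have fin: "finite S" "finite A" using P by (auto simp: pomdp_def)
  have pO0: "\<And>s ob. s\<in>S \<Longrightarrow> ob\<in>Obs \<Longrightarrow> pO s ob \<ge> 0" using P by (auto simp: pomdp_def)
  have pT0: "\<And>s a s'. s\<in>S \<Longrightarrow> a\<in>A \<Longrightarrow> s'\<in>S \<Longrightarrow> pT s a s' \<ge> 0" using P by (auto simp: pomdp_def)
  have L: "lin_relax_feasible T S Obs A p0 pO pT mu1 muSOA muSAS delta" using Q by (simp add: Qd_def)
  have d01: "\<And>t ob a. t\<in>{1..T} \<Longrightarrow> ob\<in>Obs \<Longrightarrow> a\<in>A \<Longrightarrow> delta t ob a \<in> {0,1}" using Q by (simp add: Qd_def)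
  have dsum: "\<And>t ob. t\<in>{1..T} \<Longrightarrow> ob\<in>Obs \<Longrightarrow> (\<Sum>a\<in>A. delta t ob a) = 1" using L unfolding lin_relax_feasible_def by meson
  have mu0: "\<And>t s a s'. t\<in>{1..T} \<Longrightarrow> s\<in>S \<Longrightarrow> a\<in>A \<Longrightarrow> s'\<in>S \<Longrightarrow> muSAS t s a s' \<ge> 0"
    using L unfolding lin_relax_feasible_def by meson
  have muT: "\<And>t s a s'. t\<in>{1..T} \<Longrightarrow> s\<in>S \<Longrightarrow> a\<in>A \<Longrightarrow> s'\<in>S \<Longrightarrow> muSAS t s a s' = pT s a s' * (\<Sum>sb\<in>S. muSAS t s a sb)"
    using L unfolding lin_relax_feasible_def by meson
  have mc: "\<And>t s ob a. t\<in>{1..T} \<Longrightarrow> s\<in>S \<Longrightarrow> ob\<in>Obs \<Longrightarrow> a\<in>A \<Longrightarrow>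
         muSOA t s ob a \<le> pO s ob * nu S A mu1 muSAS t s \<and>
         muSOA t s ob a \<le> delta t ob a \<and>
         muSOA t s ob a \<ge> pO s ob * nu S A mu1 muSAS t s + delta t ob a - 1"
    using L unfolding lin_relax_feasible_def by meson
  have soa0: "\<And>t s ob a. t\<in>{1..T} \<Longrightarrow> s\<in>S \<Longrightarrow> ob\<in>Obs \<Longrightarrow> a\<in>A \<Longrightarrow> muSOA t s ob a \<ge> 0"
    using L unfolding lin_relax_feasible_def by meson
  have ds0: "\<And>t ob a. t\<in>{1..T} \<Longrightarrow> ob\<in>Obs \<Longrightarrow> a\<in>A \<Longrightarrow> delta t ob a \<ge> 0" using L unfolding lin_relax_feasible_def by meson
  show ?thesis unfolding VI_def
  proof (intro conjI ballI)
    fix t s' a' s ob a assume t: "t\<in>{2..T}" and h: "s'\<in>S" "a'\<in>A" "s\<in>S" "ob\<in>Obs" "a\<in>A"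
    have t1: "t-1\<in>{1..T}" "t\<in>{1..T}" using t by auto
    show "0 \<le> delta t ob a * (pO s ob * muSAS (t - 1) s' a' s)"
      using ds0[OF t1(2) h(4,5)] pO0[OF h(3,4)] mu0[OF t1(1) h(1,2,3)] by simp
  next
    fix t s ob a assume t: "t\<in>{2..T}" and h: "s\<in>S" "ob\<in>Obs" "a\<in>A"
    have t1: "t\<in>{1..T}" using t by auto
    have nu: "nu S A mu1 muSAS t s = (\<Sum>s'\<in>S. \<Sum>a'\<in>A. muSAS (t-1) s' a' s)" using t by (simp add: nu_def)
    have "(\<Sum>s'\<in>S. \<Sum>a'\<in>A. delta t ob a * (pO s ob * muSAS (t - 1) s' a' s))
          = delta t ob a * (pO s ob * nu S A mu1 muSAS t s)"
      by (simp add: nu sum_distrib_left)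
    also have "\<dots> = muSOA t s ob a"
      using d01[OF t1 h(2,3)] mc[OF t1 h] soa0[OF t1 h] by auto
    finally show "(\<Sum>s'\<in>S. \<Sum>a'\<in>A. delta t ob a * (pO s ob * muSAS (t - 1) s' a' s)) = muSOA t s ob a" .
  next
    fix t s' a' s ob assume t: "t\<in>{2..T}" and h: "s'\<in>S" "a'\<in>A" "s\<in>S" "ob\<in>Obs"
    have t1: "t\<in>{1..T}" using t by auto
    show "(\<Sum>a\<in>A. delta t ob a * (pO s ob * muSAS (t - 1) s' a' s)) = pO s ob * muSAS (t - 1) s' a' s"
      by (simp add: sum_distrib_right[symmetric] dsum[OF t1 h(4)])
  next
    fix t s' a' s ob a assume t: "t\<in>{2..T}" and h: "s'\<in>S" "a'\<in>A" "s\<in>S" "ob\<in>Obs" "a\<in>A"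
    have t1: "t-1\<in>{1..T}" using t by auto
    define M where "M = (\<Sum>sb\<in>S. muSAS (t-1) s' a' sb)"
    define D where "D = (\<Sum>sb\<in>S. pO sb ob * pT s' a' sb)"
    have e: "\<And>sb. sb\<in>S \<Longrightarrow> muSAS (t-1) s' a' sb = pT s' a' sb * M"
      using muT[OF t1 h(1,2)] by (simp add: M_def)
    have "(\<Sum>sb\<in>S. delta t ob a * (pO sb ob * muSAS (t - 1) s' a' sb))
          = delta t ob a * M * D"
    proof -
      have "(\<Sum>sb\<in>S. delta t ob a * (pO sb ob * muSAS (t - 1) s' a' sb))
          = (\<Sum>sb\<in>S. delta t ob a * M * (pO sb ob * pT s' a' sb))"
        by (rule sum.cong) (auto simp: e[simplified])
      thus ?thesis by (simp add: D_def sum_distrib_left)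
    qed
    moreover have "pcond S pO pT s s' a' ob = pO s ob * pT s' a' s / D"
      by (simp add: pcond_def D_def)
    moreover have "D = 0 \<Longrightarrow> pO s ob * pT s' a' s = 0"
    proof -
      assume "D = 0"
      hence "\<forall>sb\<in>S. pO sb ob * pT s' a' sb = 0" unfolding D_def
        using sum_nonneg_eq_0_iff[OF fin(1)] pO0 pT0 h by (simp add: sum_nonneg_eq_0_iff[OF fin(1)])
      thus ?thesis using h by auto
    qed
    ultimately show "delta t ob a * (pO s ob * muSAS (t - 1) s' a' s) =
       pcond S pO pT s s' a' ob * (\<Sum>sb\<in>S. delta t ob a * (pO sb ob * muSAS (t - 1) s' a' sb))"
      using e[OF h(3)] by (cases "D = 0") (auto simp: field_simps)
  qed
qed

lemma ex_feas: "lin_relax_feasible 2 {0::nat,1} {0::nat} {0::nat,1} (\<lambda>_. 1/2) (\<lambda>_ _. 1) (\<lambda>_ _ _. 1/2)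
   (\<lambda>_. 1/2) (\<lambda>t s ob a. if t = 2 then (if s = a then 1/2 else 0) else 1/4)
   (\<lambda>t s a s'. (if t = 2 then (if s = a then 1/2 else 0) else 1/4) / 2) (\<lambda>_ _ _. 1/2)"
proof -
  have T: "{1..2::nat} = {1,2}" by auto
  show ?thesis unfolding lin_relax_feasible_def T by (simp add: nu_def)
qed

lemma ex_nVI: "\<not> (\<exists>muVI. VI 2 {0::nat,1} {0::nat} {0::nat,1} (\<lambda>_ _. 1) (\<lambda>_ _ _. 1/2)
   (\<lambda>t s ob a. if t = 2 then (if s = a then 1/2 else 0) else 1/4)
   (\<lambda>t s a s'. (if t = 2 then (if s = a then 1/2 else 0) else 1/4) / 2) muVI)"
proof
  assume "\<exists>muVI. VI 2 {0::nat,1} {0::nat} {0::nat,1} (\<lambda>_ _. 1) (\<lambda>_ _ _. 1/2)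
   (\<lambda>t s ob a. if t = 2 then (if s = a then 1/2 else 0) else 1/4)
   (\<lambda>t s a s'. (if t = 2 then (if s = a then 1/2 else 0) else 1/4) / 2) muVI"
  then obtain m where V: "VI 2 {0::nat,1} {0::nat} {0::nat,1} (\<lambda>_ _. 1) (\<lambda>_ _ _. 1/2)
   (\<lambda>t s ob a. if t = 2 then (if s = a then 1/2 else 0) else 1/4)
   (\<lambda>t s a s'. (if t = 2 then (if s = a then 1/2 else 0) else 1/4) / 2) m" by blast
  have pc: "pcond {0::nat,1} (\<lambda>_ _. 1) (\<lambda>_ _ _. 1/2) s s' a' ob = (1/2::real)" for s s' a' ob :: nat
    by (simp add: pcond_def)
  have c3: "\<And>s' a' s. s'\<in>{0,1} \<Longrightarrow> a'\<in>{0,1} \<Longrightarrow> s\<in>{0,1} \<Longrightarrow>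
     m 2 s' a' s 0 0 = 1/2 * (m 2 s' a' 0 0 0 + m 2 s' a' 1 0 0)"
    using V unfolding VI_def pc by simp
  have eq: "\<And>s' a'. s'\<in>{0,1} \<Longrightarrow> a'\<in>{0,1} \<Longrightarrow> m 2 s' a' 0 0 0 = m 2 s' a' 1 0 0"
  proof -
    fix s' a' assume h: "s'\<in>{0::nat,1}" "a'\<in>{0::nat,1}"
    show "m 2 s' a' 0 0 0 = m 2 s' a' 1 0 0" using c3[OF h, of 0] by simp
  qed
  have c2: "\<And>s. s\<in>{0,1} \<Longrightarrow> (\<Sum>s'\<in>{0::nat,1}. \<Sum>a'\<in>{0::nat,1}. m 2 s' a' s 0 0) = (if s = 0 then 1/2 else 0)"
    using V unfolding VI_def by auto
  have "(\<Sum>s'\<in>{0::nat,1}. \<Sum>a'\<in>{0::nat,1}. m 2 s' a' 0 0 0) = (\<Sum>s'\<in>{0::nat,1}. \<Sum>a'\<in>{0::nat,1}. m 2 s' a' 1 0 0)"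
    using eq by (simp)
  thus False using c2[of 0] c2[of 1] by simp
qed

theorem mainTheorem2:
  fixes S :: "'s set" and Obs :: "'ob set" and A :: "'a set"
  shows "(\<forall>(T::nat) p0 pO pT mu1 muSOA muSAS delta.
            pomdp S Obs A p0 pO pT \<and> T \<ge> 1 \<and>
            Qd T S Obs A p0 pO pT mu1 muSOA muSAS delta \<longrightarrow>
            (\<exists>muVI. VI T S Obs A pO pT muSOA muSAS muVI))
       \<and> (\<exists>(S'::nat set) (Obs'::nat set) (A'::nat set) (T::nat) p0 pO pT mu1 muSOA muSAS delta.
            pomdp S' Obs' A' p0 pO pT \<and> T \<ge> 1 \<and>
            lin_relax_feasible T S' Obs' A' p0 pO pT mu1 muSOA muSAS delta \<and>
            \<not> (\<exists>muVI. VI T S' Obs' A' pO pT muSOA muSAS muVI))"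
proof
  show "\<forall>(T::nat) p0 pO pT mu1 muSOA muSAS delta.
            pomdp S Obs A p0 pO pT \<and> T \<ge> 1 \<and>
            Qd T S Obs A p0 pO pT mu1 muSOA muSAS delta \<longrightarrow>
            (\<exists>muVI. VI T S Obs A pO pT muSOA muSAS muVI)"
    using part1 by blast
  have P: "pomdp {0::nat,1} {0::nat} {0::nat,1} (\<lambda>_. 1/2) (\<lambda>_ _. 1) (\<lambda>_ _ _. 1/2)"
    by (simp add: pomdp_def)
  show "\<exists>(S'::nat set) (Obs'::nat set) (A'::nat set) (T::nat) p0 pO pT mu1 muSOA muSAS delta.
            pomdp S' Obs' A' p0 pO pT \<and> T \<ge> 1 \<and>
            lin_relax_feasible T S' Obs' A' p0 pO pT mu1 muSOA muSAS delta \<and>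
            \<not> (\<exists>muVI. VI T S' Obs' A' pO pT muSOA muSAS muVI)"
    apply (rule exI[of _ "{0::nat,1}"])
    apply (rule exI[of _ "{0::nat}"])
    apply (rule exI[of _ "{0::nat,1}"])
    apply (rule exI[of _ "2::nat"])
    apply (rule exI)+
    apply (intro conjI)
       apply (rule P)
      apply simp
     apply (rule ex_feas)
    apply (rule ex_nVI)
    done
qed

end
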